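(* Let $K\ge 2$ be an integer, $\mathcal{K}=\{1,\dots,K\}$ the set of players (user equipments), and $\mathcal{L}$ a finite set (access points). For each $k\in\mathcal{K}$ let $\mathcal{M}_k\subseteq\mathcal{L}$ be a nonempty set and let $\beta_{k,l}>0$ for $k\in\mathcal{K}$, $l\in\mathcal{L}$. Fix $\alpha\in\mathbb{R}$ and $0<\rho_{\min}\le\rho_{\max}$, and let each player $k$ have strategy set $\mathcal{P}_k=[\rho_{\min},\rho_{\max}]$; write $\boldsymbol{\rho}=(\rho_1,\dots,\rho_K)\in\Upsilon=\mathcal{P}_1\times\cdots\times\mathcal{P}_K$ and $\boldsymbol{\rho}_{(-k)}$ for the strategies of all players other than $k$. Define $c_k=\big(\sum_{l\in\mathcal{M}_k}\beta_{k,l}\big)^{\alpha}$ and the payoff of player $k$ by $$\mu_k(\alpha,\rho_k,\boldsymbol{\rho}_{(-k)})=\frac{\sum_{i\neq k}\rho_i c_i}{\rho_k c_k}+\rho_k c_k\sum_{i\neq k}\frac{1}{\rho_i c_i}.$$ Then the function $$u(\alpha,\boldsymbol{\rho})=\frac12\sum_{k\in\mathcal{K}}\mu_k(\alpha,\boldsymbol{\rho})$$ is an exact potential function for the game $\mathcal{G}(\alpha)=\{\mathcal{K},\{\mathcal{P}_k\}_k,\{\mu_k\}_k\}$, i.e., for every $k\in\mathcal{K}$, every $\boldsymbol{\rho}_{(-k)}$, and every $\rho_k,\rho_k'\in\mathcal{P}_k$, $$u(\alpha,\rho_k',\boldsymbol{\rho}_{(-k)})-u(\alpha,\rho_k,\boldsymbol{\rho}_{(-k)})=\mu_k(\alpha,\rho_k',\boldsymbol{\rho}_{(-k)})-\mu_k(\alpha,\rho_k,\boldsymbol{\rho}_{(-k)}).$$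 In particular $\mathcal{G}(\alpha)$ is an exact potential game.
   Context: A strategic game with player set $\mathcal{K}$, strategy sets $\mathcal{P}_k$ and payoffs $\mu_k:\Upsilon\to\mathbb{R}$ is an exact potential game if there is a function $u:\Upsilon\to\mathbb{R}$ (an exact potential function) such that any unilateral change of strategy by any player $k$ changes $u$ by exactly the same amount as it changes $\mu_k$. Here $\rho_k$ is the uplink data transmit power of user $k$, $\beta_{k,l}$ is the large-scale fading coefficient between user $k$ and access point $l$, and $\mathcal{M}_k$ is the set of access points serving user $k$. *)

theory Defs
  imports "HOL-Analysis.Analysis"
begin

text \<open>Players are 1..K; a strategy profile is a function rho :: nat => real,
  only its values on {1..K} matter.  Profile set Upsilon.\<close>

definition profiles :: "nat \<Rightarrow> real \<Rightarrow> real \<Rightarrow> (nat \<Rightarrow> real) set" where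
  "profiles K rmin rmax = {rho. \<forall>k\<in>{1..K}. rho k \<in> {rmin..rmax}}"

definition cfac :: "real \<Rightarrow> (nat \<Rightarrow> 'l set) \<Rightarrow> (nat \<Rightarrow> 'l \<Rightarrow> real) \<Rightarrow> nat \<Rightarrow> real" where
  "cfac \<alpha> M \<beta> k = (\<Sum>l\<in>M k. \<beta> k l) powr \<alpha>"

definition payoff :: "nat \<Rightarrow> real \<Rightarrow> (nat \<Rightarrow> 'l set) \<Rightarrow> (nat \<Rightarrow> 'l \<Rightarrow> real)
    \<Rightarrow> nat \<Rightarrow> (nat \<Rightarrow> real) \<Rightarrow> real" where
  "payoff K \<alpha> M \<beta> k rho =
     (\<Sum>i\<in>{1..K}-{k}. rho i * cfac \<alpha> M \<beta> i) / (rho k * cfac \<alpha> M \<beta> k)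
     + rho k * cfac \<alpha> M \<beta> k * (\<Sum>i\<in>{1..K}-{k}. 1 / (rho i * cfac \<alpha> M \<beta> i))"

definition potential :: "nat \<Rightarrow> real \<Rightarrow> (nat \<Rightarrow> 'l set) \<Rightarrow> (nat \<Rightarrow> 'l \<Rightarrow> real)
    \<Rightarrow> (nat \<Rightarrow> real) \<Rightarrow> real" where
  "potential K \<alpha> M \<beta> rho = (1/2) * (\<Sum>k\<in>{1..K}. payoff K \<alpha> M \<beta> k rho)"

definition exact_potential :: "nat set \<Rightarrow> (nat \<Rightarrow> real set) \<Rightarrow> (nat \<Rightarrow> (nat \<Rightarrow> real) \<Rightarrow> real)
    \<Rightarrow> ((nat \<Rightarrow> real) \<Rightarrow> real) \<Rightarrow> bool" where
  "exact_potential P S mu u \<longleftrightarrow>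
     (\<forall>k\<in>P. \<forall>rho. (\<forall>i\<in>P. rho i \<in> S i) \<longrightarrow> (\<forall>r'\<in>S k.
        u (rho(k := r')) - u rho = mu k (rho(k := r')) - mu k rho))"

end

theory Submission
  imports Defs
begin

definition gg :: "(nat \<Rightarrow> real) \<Rightarrow> nat \<Rightarrow> nat \<Rightarrow> real" where
  "gg x i k = x i / x k + x k / x i"

lemma payoff_gg:
  "payoff K \<alpha> M \<beta> k rho = (\<Sum>i\<in>{1..K}-{k}. gg (\<lambda>i. rho i * cfac \<alpha> M \<beta> i) i k)"
  unfolding payoff_def gg_def
  by (simp add: sum.distrib sum_divide_distrib sum_distrib_left)

lemma pot_split:
  fixes x :: "nat \<Rightarrow> real"
  assumes j: "j \<in> D" and fin: "finite D"
  shows "(\<Sum>k\<in>D. \<Sum>i\<in>D-{k}. gg x i k)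
     = 2 * (\<Sum>i\<in>D-{j}. gg x i j) + (\<Sum>k\<in>D-{j}. \<Sum>i\<in>D-{k,j}. gg x i k)"
proof -
  have s: "gg x i k = gg x k i" for i k unfolding gg_def by simp
  have "(\<Sum>k\<in>D. \<Sum>i\<in>D-{k}. gg x i k) = (\<Sum>i\<in>D-{j}. gg x i j) + (\<Sum>k\<in>D-{j}. \<Sum>i\<in>D-{k}. gg x i k)"
    using j fin by (simp add: sum.remove)
  moreover have "(\<Sum>i\<in>D-{k}. gg x i k) = gg x j k + (\<Sum>i\<in>D-{k,j}. gg x i k)" if "k \<in> D-{j}" for k
  proof -
    have "j \<in> D - {k}" using that j by auto
    hence "(\<Sum>i\<in>D-{k}. gg x i k) = gg x j k + (\<Sum>i\<in>D-{k}-{j}. gg x i k)"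
      using fin by (simp add: sum.remove)
    moreover have "D-{k}-{j} = D-{k,j}" by auto
    ultimately show ?thesis by simp
  qed
  hence "(\<Sum>k\<in>D-{j}. \<Sum>i\<in>D-{k}. gg x i k) = (\<Sum>k\<in>D-{j}. gg x j k) + (\<Sum>k\<in>D-{j}. \<Sum>i\<in>D-{k,j}. gg x i k)"
    by (simp add: sum.distrib)
  moreover have "(\<Sum>k\<in>D-{j}. gg x j k) = (\<Sum>i\<in>D-{j}. gg x i j)" using s by simp
  ultimately show ?thesis by simp
qed

theorem corollary1:
  fixes K :: nat and L :: "'l set" and M :: "nat \<Rightarrow> 'l set"
    and \<beta> :: "nat \<Rightarrow> 'l \<Rightarrow> real" and \<alpha> \<rho>min \<rho>max :: real
  assumes "K \<ge> 2" and "finite L"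
    and "\<And>k. k \<in> {1..K} \<Longrightarrow> M k \<subseteq> L \<and> M k \<noteq> {}"
    and "\<And>k l. k \<in> {1..K} \<Longrightarrow> l \<in> L \<Longrightarrow> \<beta> k l > 0"
    and "0 < \<rho>min" and "\<rho>min \<le> \<rho>max"
  shows "exact_potential {1..K} (\<lambda>_. {\<rho>min..\<rho>max}) (\<lambda>k. payoff K \<alpha> M \<beta> k)
           (potential K \<alpha> M \<beta>)"
  unfolding exact_potential_def
proof (intro ballI allI impI)
  fix j rho r'
  assume j: "j \<in> {1..K}"
  define c where "c = cfac \<alpha> M \<beta>"
  let ?D = "{1..K::nat}"
  let ?x = "\<lambda>rho i. rho i * c i"
  have P: "potential K \<alpha> M \<beta> r = payoff K \<alpha> M \<beta> j r
      + (1/2) * (\<Sum>k\<in>?D-{j}. \<Sum>i\<in>?D-{k,j}. gg (?x r) i k)" for r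
    unfolding potential_def payoff_gg c_def
    using pot_split[OF j, of "?x r"] payoff_gg[of K \<alpha> M \<beta> j r]
    by (simp add: c_def payoff_gg)
  have R: "(\<Sum>k\<in>?D-{j}. \<Sum>i\<in>?D-{k,j}. gg (?x (rho(j:=r'))) i k)
         = (\<Sum>k\<in>?D-{j}. \<Sum>i\<in>?D-{k,j}. gg (?x rho) i k)"
    by (intro sum.cong refl) (auto simp: gg_def)
  show "potential K \<alpha> M \<beta> (rho(j := r')) - potential K \<alpha> M \<beta> rho =
        payoff K \<alpha> M \<beta> j (rho(j := r')) - payoff K \<alpha> M \<beta> j rho"
    using P[of "rho(j:=r')"] P[of rho] R by simp
qed

end
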